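(* Assume the setting of the context and fix $\Delta=(h,\Delta x)$. If $\mathbf{U}=(U_{\cdot,1},U_{\cdot,2}),\mathbf{V}=(V_{\cdot,1},V_{\cdot,2})\in B(\mathcal{A}^{\Delta x})^2$ are respectively a bounded subsolution and a bounded supersolution of the scheme, i.e. $$\mathcal{F}^\Delta_j\big(x_i,(U_{i,j},U_{i,\bar\jmath}),U_{\cdot,j}\big)\le0\quad\text{and}\quad\mathcal{F}^\Delta_j\big(x_i,(V_{i,j},V_{i,\bar\jmath}),V_{\cdot,j}\big)\ge0\qquad\forall i\in\mathbb{N},\ j=1,2,$$ then $U_{i,j}\le V_{i,j}$ for all $i\in\mathbb{N}$ and $j=1,2$.
   Context: Constants: $\rho>0$, $r<\rho$, $0<y_1<y_2$, $\gamma>1$, $\underline{x}\le0$ with $\rho\underline{x}+y_j>0$, $\lambda_1,\lambda_2\ge0$; $\bar\jmath=3-j$; $u(c)=\frac{c^{1-\gamma}}{1-\gamma}$ for $c>0$, $u(0)=-\infty$. Discretization $\Delta=(h,\Delta x)$ with $h,\Delta x>0$, $\rho h<1$, $\lambda_jh<1$. Grid $x_i=\underline{x}+i\Delta x$, $i\in\mathbb{N}=\{0,1,\dots\}$, $\mathcal{A}^{\Delta x}=\{x_i\}$; $B(\mathcal{A}^{\Delta x})$ = bounded real sequences indexed by $\mathbb{N}$. $\beta_k(x)=\max\{0,1-|x-x_k|/\Delta x\}$ for $x\ge\underline{x}$. Admissible controls $\mathcal{C}^\Delta_j(x_i)=\{c\ge0:x_i+h(rx_i+y_j-c)\ge\underline{x}\}$,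 $s_{i,j}(c)=rx_i+y_j-c$. Scheme: $$\mathcal{F}^\Delta_j(x_i,(\mathsf{q}_j,\mathsf{q}_{\bar\jmath}),\mathsf{U})=\rho\mathsf{q}_j-(1-\rho h)\lambda_j(\mathsf{q}_{\bar\jmath}-\mathsf{q}_j)-\sup_{c\in\mathcal{C}^\Delta_j(x_i)}\Big\{u(c)+\frac{(1-\rho h)(1-\lambda_jh)}{h}\Big(\sum_k\beta_k(x_i+hs_{i,j}(c))\mathsf{U}_k-\mathsf{q}_j\Big)\Big\}.$$ *)

theory Defs
  imports "HOL-Analysis.Analysis" "HOL-Library.Extended_Real"
begin

definition util :: "real \<Rightarrow> real \<Rightarrow> ereal" where
  "util \<gamma> c = (if c > 0 then ereal (c powr (1 - \<gamma>) / (1 - \<gamma>)) else -\<infinity>)"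

definition grid :: "real \<Rightarrow> real \<Rightarrow> nat \<Rightarrow> real" where
  "grid xlow dx i = xlow + real i * dx"

definition hatb :: "real \<Rightarrow> real \<Rightarrow> nat \<Rightarrow> real \<Rightarrow> real" where
  "hatb xlow dx k x = max 0 (1 - \<bar>x - grid xlow dx k\<bar> / dx)"

definition interp :: "real \<Rightarrow> real \<Rightarrow> (nat \<Rightarrow> real) \<Rightarrow> real \<Rightarrow> real" where
  "interp xlow dx U x = (\<Sum>k. hatb xlow dx k x * U k)"

definition admissible :: "real \<Rightarrow> real \<Rightarrow> real \<Rightarrow> real \<Rightarrow> real \<Rightarrow> real set" where
  "admissible r xlow h yj x = {c. c \<ge> 0 \<and> x + h * (r * x + yj - c) \<ge> xlow}"

text \<open>The scheme F_j(x_i,(q_j,q_jbar),U), extended-real valued (the supremum may be -infinity).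
  Here y and lam are the functions j \<mapsto> y_j and j \<mapsto> lambda_j, j \<in> {1,2}.\<close>
definition scheme ::
  "real \<Rightarrow> real \<Rightarrow> real \<Rightarrow> real \<Rightarrow> (nat \<Rightarrow> real) \<Rightarrow> (nat \<Rightarrow> real) \<Rightarrow> real \<Rightarrow> real
   \<Rightarrow> nat \<Rightarrow> nat \<Rightarrow> real \<Rightarrow> real \<Rightarrow> (nat \<Rightarrow> real) \<Rightarrow> ereal" where
  "scheme \<rho> r \<gamma> xlow y lam h dx j i qj qjb U =
     (let x = grid xlow dx i in
      ereal (\<rho> * qj - (1 - \<rho> * h) * lam j * (qjb - qj))
      - (SUP c \<in> admissible r xlow h (y j) x.
           util \<gamma> c + ereal ((1 - \<rho> * h) * (1 - lam j * h) / h
              * (interp xlow dx U (x + h * (r * x + y j - c)) - qj))))"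

end

theory Submission imports Defs begin

lemma hatb_t: assumes "dx > 0"
  shows "hatb xlow dx k z = max 0 (1 - \<bar>(z - xlow)/dx - real k\<bar>)"
proof -
  have "\<bar>z - grid xlow dx k\<bar> / dx = \<bar>(z - grid xlow dx k)/dx\<bar>" using assms by simp
  also have "(z - grid xlow dx k)/dx = (z - xlow)/dx - real k" using assms
    by (simp add: grid_def field_simps)
  finally show ?thesis unfolding hatb_def by simp
qed

lemma interp_two:
  assumes "dx > 0" "z \<ge> xlow"
  obtains n f where "0 \<le> f" "f \<le> 1"
    "\<And>U. interp xlow dx U z = (1-f)*U n + f * U (Suc n)"
proof -
  define t where "t = (z - xlow)/dx"
  have t0: "t \<ge> 0" using assms by (simp add: t_def)
  define n where "n = nat \<lfloor>t\<rfloor>"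
  have rn: "real n = of_int \<lfloor>t\<rfloor>" using t0 by (simp add: n_def)
  define f where "f = t - real n"
  have f0: "0 \<le> f" "f < 1" using rn by (auto simp: f_def) linarith+
  have hb: "hatb xlow dx k z = max 0 (1 - \<bar>t - real k\<bar>)" for k
    using hatb_t[OF assms(1)] t_def by simp
  have h0: "hatb xlow dx k z = 0" if "k \<notin> {n, Suc n}" for k
  proof -
    have "k < n \<or> k > Suc n" using that by auto
    then have "\<bar>t - real k\<bar> \<ge> 1" using f0 unfolding f_def by auto
    then show ?thesis using hb by simp
  qed
  have hn: "hatb xlow dx n z = 1 - f" using hb f0 by (simp add: f_def)
  have hs: "hatb xlow dx (Suc n) z = f" using hb f0 by (simp add: f_def)
  have "interp xlow dx U z = (1-f)*U n + f * U (Suc n)" for U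
  proof -
    have "interp xlow dx U z = (\<Sum>k\<in>{n, Suc n}. hatb xlow dx k z * U k)"
      unfolding interp_def by (rule suminf_finite) (auto simp: h0)
    then show ?thesis using hn hs by simp
  qed
  then show ?thesis using that f0 by auto
qed

lemma ereal_le1: "ereal a - S \<le> 0 \<Longrightarrow> ereal a \<le> S" by (cases S) auto
lemma ereal_le2: "ereal a - S \<ge> 0 \<Longrightarrow> S \<le> ereal a" by (cases S) auto

theorem mainTheorem11:
  fixes \<rho> r \<gamma> xlow h dx :: real
    and y lam :: "nat \<Rightarrow> real"
    and U V :: "nat \<Rightarrow> nat \<Rightarrow> real"
  assumes "\<rho> > 0" and "r < \<rho>"
    and "0 < y 1" and "y 1 < y 2"
    and "\<gamma> > 1" and "xlow \<le> 0"
    and "\<And>j. j \<in> {1,2} \<Longrightarrow> \<rho> * xlow + y j > 0"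
    and "\<And>j. j \<in> {1,2} \<Longrightarrow> lam j \<ge> 0"
    and "h > 0" and "dx > 0" and "\<rho> * h < 1"
    and "\<And>j. j \<in> {1,2} \<Longrightarrow> lam j * h < 1"
    and "\<exists>M. \<forall>i. \<forall>j\<in>{1,2}. \<bar>U i j\<bar> \<le> M"
    and "\<exists>M. \<forall>i. \<forall>j\<in>{1,2}. \<bar>V i j\<bar> \<le> M"
    and "\<And>i j. j \<in> {1,2} \<Longrightarrow>
           scheme \<rho> r \<gamma> xlow y lam h dx j i (U i j) (U i (3 - j)) (\<lambda>k. U k j) \<le> 0"
    and "\<And>i j. j \<in> {1,2} \<Longrightarrow>
           scheme \<rho> r \<gamma> xlow y lam h dx j i (V i j) (V i (3 - j)) (\<lambda>k. V k j) \<ge> 0"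
  shows "\<forall>i. \<forall>j\<in>{1,2}. U i j \<le> V i j"
proof -
  define D where "D i j = U i j - V i j" for i j
  obtain MU where MU: "\<forall>i. \<forall>j\<in>{1,2}. \<bar>U i j\<bar> \<le> MU" using assms(13) by blast
  obtain MV where MV: "\<forall>i. \<forall>j\<in>{1,2}. \<bar>V i j\<bar> \<le> MV" using assms(14) by blast
  define S where "S = {D i j | i j. j \<in> {1::nat,2}}"
  have bdd: "bdd_above S" unfolding bdd_above_def S_def
  proof (intro exI[of _ "MU + MV"] ballI)
    fix x assume "x \<in> {D i j |i j. j \<in> {1::nat, 2}}"
    then obtain i j where "x = D i j" "j \<in> {1::nat,2}" by blast
    moreover have "\<bar>U i j\<bar> \<le> MU" "\<bar>V i j\<bar> \<le> MV" using MU MV \<open>j \<in> {1::nat,2}\<close> by auto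
    ultimately show "x \<le> MU + MV" unfolding D_def by linarith
  qed
  have ne: "S \<noteq> {}" unfolding S_def by blast
  define M where "M = Sup S"
  have DM: "D i j \<le> M" if "j \<in> {1,2}" for i j
    unfolding M_def by (rule cSup_upper[OF _ bdd]) (use that in \<open>auto simp: S_def\<close>)
  define K where "K j = (1 - \<rho> * h) * (1 - lam j * h) / h" for j
  define C where "C j = (1 - \<rho> * h) * lam j + K j" for j
  have Cnn: "C j \<ge> 0" if "j \<in> {1,2}" for j
  proof -
    have "K j \<ge> 0" unfolding K_def using assms(9,11) assms(12)[OF that] by simp
    moreover have "(1 - \<rho> * h) * lam j \<ge> 0" using assms(11) assms(8)[OF that] by simp
    ultimately show ?thesis unfolding C_def by simp
  qed
  have key: "\<rho> * D i j \<le> C j * (M - D i j)" if j: "j \<in> {1,2}" for i j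
  proof -
    define x where "x = grid xlow dx i"
    define A where "A = admissible r xlow h (y j) x"
    define AU where "AU = \<rho> * U i j - (1 - \<rho> * h) * lam j * (U i (3-j) - U i j)"
    define AV where "AV = \<rho> * V i j - (1 - \<rho> * h) * lam j * (V i (3-j) - V i j)"
    define gU where "gU c = util \<gamma> c + ereal (K j * (interp xlow dx (\<lambda>k. U k j) (x + h * (r * x + y j - c)) - U i j))" for c
    define gV where "gV c = util \<gamma> c + ereal (K j * (interp xlow dx (\<lambda>k. V k j) (x + h * (r * x + y j - c)) - V i j))" for c
    define e where "e = K j * (M - D i j)"
    have K0: "K j \<ge> 0" unfolding K_def using assms(9,11) assms(12)[OF j] by simp
    have hU: "ereal AU - (SUP c\<in>A. gU c) \<le> 0"
      using assms(15)[OF j, of i] unfolding scheme_def Let_def AU_def A_def gU_def x_def K_def .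
    have hV: "ereal AV - (SUP c\<in>A. gV c) \<ge> 0"
      using assms(16)[OF j, of i] unfolding scheme_def Let_def AV_def A_def gV_def x_def K_def .
    have cmp: "gU c \<le> gV c + ereal e" if c: "c \<in> A" for c
    proof -
      define z where "z = x + h * (r * x + y j - c)"
      have zl: "z \<ge> xlow" using c unfolding A_def admissible_def z_def by simp
      obtain f n where f: "0 \<le> f" "f \<le> 1"
        "\<And>W. interp xlow dx W z = (1-f)*W n + f * W (Suc n)"
        by (rule interp_two[OF assms(10) zl]) blast
      have "interp xlow dx (\<lambda>k. U k j) z - interp xlow dx (\<lambda>k. V k j) z
            = (1-f) * D n j + f * D (Suc n) j" unfolding f(3) D_def by (simp only: right_diff_distrib; linarith)
      also have "\<dots> \<le> (1-f) * M + f * M"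
      proof -
        have "(1-f) * D n j \<le> (1-f) * M" using DM[OF j, of n] f(2) by (intro mult_left_mono) auto
        moreover have "f * D (Suc n) j \<le> f * M" using DM[OF j, of "Suc n"] f(1) by (intro mult_left_mono) auto
        ultimately show ?thesis by linarith
      qed
      finally have "interp xlow dx (\<lambda>k. U k j) z - interp xlow dx (\<lambda>k. V k j) z \<le> M" by (simp add: left_diff_distrib)
      then have "K j * (interp xlow dx (\<lambda>k. U k j) z - U i j) \<le> K j * (interp xlow dx (\<lambda>k. V k j) z - V i j) + e"
      proof -
        let ?IU = "interp xlow dx (\<lambda>k. U k j) z" and ?IV = "interp xlow dx (\<lambda>k. V k j) z"
        have nn: "K j * (M - (?IU - ?IV)) \<ge> 0" using K0 \<open>?IU - ?IV \<le> M\<close> by simp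
        have eq: "K j * (?IV - V i j) + K j * (M - (U i j - V i j)) - K j * (?IU - U i j) = K j * (M - (?IU - ?IV))"
          by (simp add: algebra_simps)
        show ?thesis unfolding e_def D_def using nn eq by linarith
      qed
      then have R: "ereal (K j * (interp xlow dx (\<lambda>k. U k j) z - U i j)) \<le> ereal (K j * (interp xlow dx (\<lambda>k. V k j) z - V i j) + e)"
        by (simp only: ereal_less_eq(3))
      have "gU c = util \<gamma> c + ereal (K j * (interp xlow dx (\<lambda>k. U k j) z - U i j))"
        unfolding gU_def z_def by (rule refl)
      also have "\<dots> \<le> util \<gamma> c + ereal (K j * (interp xlow dx (\<lambda>k. V k j) z - V i j) + e)"
        by (rule add_mono[OF order_refl R])
      also have "\<dots> = gV c + ereal e"
        unfolding gV_def z_def by (simp only: add.assoc plus_ereal.simps)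
      finally show ?thesis .
    qed
    have "(SUP c\<in>A. gU c) \<le> (SUP c\<in>A. gV c) + ereal e"
    proof (rule SUP_least)
      fix c assume "c \<in> A"
      then have "gU c \<le> gV c + ereal e" by (rule cmp)
      also have "\<dots> \<le> (SUP c\<in>A. gV c) + ereal e"
        by (intro add_mono[OF _ order_refl] SUP_upper) fact
      finally show "gU c \<le> (SUP c\<in>A. gV c) + ereal e" .
    qed
    then have S1: "(SUP c\<in>A. gU c) \<le> ereal AV + ereal e"
      using add_mono[OF ereal_le2[OF hV] order_refl[of "ereal e"]] by (rule order_trans)
    have "ereal AU \<le> ereal AV + ereal e" using ereal_le1[OF hU] S1 by (rule order_trans)
    then have ineq: "AU \<le> AV + e" by simp
    have j3: "3 - j \<in> {1,2}" using j by auto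
    have l0: "(1 - \<rho> * h) * lam j \<ge> 0" using assms(11) assms(8)[OF j] by simp
    have "\<rho> * D i j \<le> (1 - \<rho> * h) * lam j * (D i (3-j) - D i j) + K j * (M - D i j)"
    proof -
      have "AU - AV = \<rho> * D i j - (1 - \<rho> * h) * lam j * (D i (3-j) - D i j)"
        unfolding AU_def AV_def D_def by (simp only: right_diff_distrib; linarith)
      then show ?thesis using ineq unfolding e_def by linarith
    qed
    also have "\<dots> \<le> (1 - \<rho> * h) * lam j * (M - D i j) + K j * (M - D i j)"
      using DM[OF j3, of i] l0 by (intro add_right_mono mult_left_mono) auto
    also have "\<dots> = C j * (M - D i j)" unfolding C_def by (simp only: distrib_right)
    finally show ?thesis .
  qed
  define CC where "CC = C 1 + C 2"
  have CC0: "CC \<ge> 0" using Cnn[of 1] Cnn[of 2] by (simp add: CC_def)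
  have key2: "\<rho> * D i j \<le> CC * (M - D i j)" if j: "j \<in> {1,2}" for i j
  proof -
    have "C j \<le> CC" using j Cnn[of 1] Cnn[of 2] by (auto simp: CC_def)
    moreover have "M - D i j \<ge> 0" using DM[OF j, of i] by simp
    ultimately have "C j * (M - D i j) \<le> CC * (M - D i j)"
      by (rule mult_right_mono)
    then show ?thesis using key[OF j, of i] by linarith
  qed
  have "M \<le> 0"
  proof (rule ccontr)
    assume "\<not> M \<le> 0"
    then have Mp: "M > 0" by simp
    define \<epsilon> where "\<epsilon> = \<rho> * M / (\<rho> + CC)"
    have ep: "\<epsilon> > 0" unfolding \<epsilon>_def using Mp assms(1) CC0 by simp
    have "M - \<epsilon> < Sup S" using ep M_def by simp
    from less_cSupD[OF ne this] obtain s where s: "s \<in> S" "M - \<epsilon> < s" by blast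
    from s(1) obtain i j where j: "j \<in> {1::nat,2}" and sD: "s = D i j" unfolding S_def by blast
    have Dg: "M - \<epsilon> < D i j" using s(2) sD by simp
    have "\<rho> * (M - \<epsilon>) < \<rho> * D i j" using Dg assms(1) by simp
    also have "\<dots> \<le> CC * (M - D i j)" by (rule key2[OF j])
    also have "\<dots> \<le> CC * \<epsilon>" using Dg by (intro mult_left_mono[OF _ CC0]) simp
    finally have "\<rho> * (M - \<epsilon>) < CC * \<epsilon>" .
    then have "\<rho> * M < (\<rho> + CC) * \<epsilon>" by (simp only: right_diff_distrib distrib_right; linarith)
    also have "(\<rho> + CC) * \<epsilon> = \<rho> * M" unfolding \<epsilon>_def using assms(1) CC0 by simp
    finally show False by simp
  qed
  then show ?thesis
  proof (intro allI ballI)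
    fix i j assume "M \<le> 0" "j \<in> {1::nat,2}"
    then show "U i j \<le> V i j" using DM[of j i] unfolding D_def by simp
  qed
qed

end
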